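(* Let $k\ge 2$ and let $n_1,\dots,n_k\ge 3$ be integers. For $G=P_{n_1}\Box P_{n_2}\Box\cdots\Box P_{n_k}$, $$rx_3(G)=\sum_{i=1}^k n_i-k.$$
   Context: $P_n$ denotes the path on $n$ vertices. An edge coloring may give adjacent edges the same color; a tree is rainbow if its edges have pairwise distinct colors. For a connected graph $G$ on at least $3$ vertices, $rx_3(G)$ is the minimum number of colors in an edge coloring such that every set of $3$ vertices lies in some rainbow tree. The Cartesian product $G\Box H$ has vertex set $V(G)\times V(H)$, with $(g_1,h_1)\sim(g_2,h_2)$ iff ($g_1=g_2$ and $h_1h_2\in E(H)$) or ($h_1=h_2$ and $g_1g_2\in E(G)$). *)

theory Defs
  imports Main
begin

text \<open>A (simple, undirected) graph is a pair (V, E) of a vertex set and a set of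
  edges, each edge being a 2-element subset of V.\<close>

type_synonym 'a graph = "'a set \<times> 'a set set"

definition path_graph :: "nat \<Rightarrow> nat graph" where
  "path_graph n = ({0..<n}, {{i, Suc i} | i. Suc i < n})"

definition cart_prod :: "'a graph list \<Rightarrow> 'a list graph" where
  "cart_prod Gs =
    ({xs. length xs = length Gs \<and> (\<forall>i<length Gs. xs ! i \<in> fst (Gs ! i))},
     {{xs, ys} | xs ys.
        length xs = length Gs \<and> (\<forall>i<length Gs. xs ! i \<in> fst (Gs ! i)) \<and>
        length ys = length Gs \<and> (\<forall>i<length Gs. ys ! i \<in> fst (Gs ! i)) \<and>
        (\<exists>i<length Gs. {xs ! i, ys ! i} \<in> snd (Gs ! i) \<and>
            (\<forall>j<length Gs. j \<noteq> i \<longrightarrow> xs ! j = ys ! j))})"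

definition adj_in :: "'a set set \<Rightarrow> 'a \<Rightarrow> 'a \<Rightarrow> bool" where
  "adj_in T u v \<longleftrightarrow> {u, v} \<in> T \<and> u \<noteq> v"

definition is_tree :: "'a set set \<Rightarrow> bool" where
  "is_tree T \<longleftrightarrow> finite T \<and> T \<noteq> {} \<and> (\<forall>e\<in>T. card e = 2) \<and>
     (\<forall>u\<in>\<Union>T. \<forall>v\<in>\<Union>T. (adj_in T)\<^sup>*\<^sup>* u v) \<and>
     card T + 1 = card (\<Union>T)"

definition three_rainbow_colouring :: "'a graph \<Rightarrow> nat \<Rightarrow> ('a set \<Rightarrow> nat) \<Rightarrow> bool" where
  "three_rainbow_colouring G m c \<longleftrightarrow>
     (\<forall>e\<in>snd G. c e < m) \<and>
     (\<forall>S\<subseteq>fst G. card S = 3 \<longrightarrow>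
        (\<exists>T\<subseteq>snd G. is_tree T \<and> S \<subseteq> \<Union>T \<and> inj_on c T))"

definition rx3 :: "'a graph \<Rightarrow> nat" where
  "rx3 G = (LEAST m. \<exists>c. three_rainbow_colouring G m c)"

end

theory Submission
  imports Defs
begin


lemma adj_sym: "adj_in T x y \<Longrightarrow> adj_in T y x"
  by (auto simp: adj_in_def insert_commute)

lemma rtr_sym: "(adj_in T)\<^sup>*\<^sup>* x y \<Longrightarrow> (adj_in T)\<^sup>*\<^sup>* y x"
  by (induction rule: rtranclp_induct) (auto intro: converse_rtranclp_into_rtranclp adj_sym)

lemma rtr_mono: assumes "T \<subseteq> T'" shows "(adj_in T)\<^sup>*\<^sup>* x y \<Longrightarrow> (adj_in T')\<^sup>*\<^sup>* x y"
  by (induction rule: rtranclp_induct) (use assms in \<open>auto simp: adj_in_def intro: rtranclp.rtrancl_into_rtrancl\<close>)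

lemma rtr_in: "(adj_in T)\<^sup>*\<^sup>* x y \<Longrightarrow> x = y \<or> (x \<in> \<Union>T \<and> y \<in> \<Union>T)"
  by (induction rule: rtranclp_induct) (auto simp: adj_in_def)

lemma crossing: "r\<^sup>*\<^sup>* a b \<Longrightarrow> P a \<Longrightarrow> \<not> P b \<Longrightarrow> \<exists>x y. r x y \<and> P x \<and> \<not> P y"
  by (induction rule: rtranclp_induct) auto

definition tr :: "'a set \<Rightarrow> 'a set set \<Rightarrow> bool" where
  "tr V T \<longleftrightarrow> finite V \<and> (\<forall>e\<in>T. card e = 2 \<and> e \<subseteq> V) \<and>
     (\<forall>x\<in>V. \<forall>y\<in>V. (adj_in T)\<^sup>*\<^sup>* x y) \<and> card T + 1 = card V"

lemma tr_single: "tr {r} {}"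
  by (auto simp: tr_def)

lemma tr_leaf:
  assumes "tr V T" "u \<in> V" "v \<notin> V"
  shows "tr (insert v V) (insert {u,v} T)"
proof -
  have fin: "finite V" using assms by (auto simp: tr_def)
  have ftT: "finite T"
  proof -
    have "T \<subseteq> Pow V" using assms(1) by (auto simp: tr_def)
    thus ?thesis using fin finite_subset by blast
  qed
  have uv: "u \<noteq> v" using assms by auto
  have nT: "{u,v} \<notin> T" using assms by (auto simp: tr_def)
  let ?T = "insert {u,v} T"
  have a1: "(adj_in ?T)\<^sup>*\<^sup>* x y" if "x \<in> V" "y \<in> V" for x y
  proof -
    have "(adj_in T)\<^sup>*\<^sup>* x y" using assms(1) that by (auto simp: tr_def)
    thus ?thesis using rtr_mono[of T ?T] by blast
  qed
  have a2: "(adj_in ?T)\<^sup>*\<^sup>* x v" if "x \<in> V" for x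
  proof -
    have "(adj_in ?T)\<^sup>*\<^sup>* x u" using a1 that assms by auto
    moreover have "adj_in ?T u v" using uv by (auto simp: adj_in_def)
    ultimately show ?thesis by (rule rtranclp.rtrancl_into_rtrancl)
  qed
  have conn: "\<forall>x\<in>insert v V. \<forall>y\<in>insert v V. (adj_in ?T)\<^sup>*\<^sup>* x y"
  proof (intro ballI)
    fix x y assume xy: "x \<in> insert v V" "y \<in> insert v V"
    show "(adj_in ?T)\<^sup>*\<^sup>* x y"
    proof (cases "x = v")
      case True
      show ?thesis
      proof (cases "y = v")
        case False
        then have "(adj_in ?T)\<^sup>*\<^sup>* y x" using a2 xy True by auto
        then show ?thesis by (rule rtr_sym)
      qed (use True in auto)
    next
      case False
      then show ?thesis using a1 a2 xy by auto
    qed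
  qed
  have c1: "card (insert v V) = card V + 1" using fin assms(3) by simp
  have c2: "card ?T = card T + 1" using ftT nT by simp
  have e: "\<forall>e\<in>?T. card e = 2 \<and> e \<subseteq> insert v V"
    using assms(1,2) uv unfolding tr_def by auto
  have "card T + 1 = card V" using assms(1) unfolding tr_def by blast
  then show ?thesis unfolding tr_def using c1 c2 e conn fin by simp
qed

lemma tr_is_tree:
  assumes "tr V T" "T \<noteq> {}"
  shows "is_tree T \<and> \<Union>T = V"
proof -
  have fin: "finite V" using assms by (auto simp: tr_def)
  have ftT: "finite T"
  proof -
    have "T \<subseteq> Pow V" using assms(1) by (auto simp: tr_def)
    thus ?thesis using fin finite_subset by blast
  qed
  have sub: "\<Union>T \<subseteq> V" using assms by (auto simp: tr_def)
  have sup: "V \<subseteq> \<Union>T"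
  proof
    fix x assume x: "x \<in> V"
    obtain e where e: "e \<in> T" using assms by auto
    then have "card e = 2" using assms by (auto simp: tr_def)
    then obtain a b where ab: "e = {a,b}" "a \<noteq> b" by (auto simp: card_2_iff)
    show "x \<in> \<Union>T"
    proof (cases "x = a")
      case True thus ?thesis using e ab by auto
    next
      case False
      have "a \<in> V" using e ab assms by (auto simp: tr_def)
      then have "(adj_in T)\<^sup>*\<^sup>* x a" using x assms by (auto simp: tr_def)
      thus ?thesis using rtr_in False by fastforce
    qed
  qed
  have eq: "\<Union>T = V" using sub sup by (rule equalityI)
  have "(\<forall>e\<in>T. card e = 2) \<and> (\<forall>u\<in>V. \<forall>v\<in>V. (adj_in T)\<^sup>*\<^sup>* u v) \<and> card T + 1 = card V"
    using assms(1) unfolding tr_def by blast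
  then show ?thesis using ftT assms(2) eq unfolding is_tree_def by simp
qed

lemma spanning:
  assumes fin: "finite H" and c2: "\<forall>e\<in>H. card e = 2"
    and conn: "\<forall>x\<in>\<Union>H. \<forall>y\<in>\<Union>H. (adj_in H)\<^sup>*\<^sup>* x y"
    and r: "r \<in> \<Union>H"
  shows "\<exists>T\<subseteq>H. tr (\<Union>H) T"
proof -
  have finU: "finite (\<Union>H)" using fin c2 by (intro finite_Union) (auto intro!: card_ge_0_finite)
  have main: "\<And>V T. tr V T \<Longrightarrow> T \<subseteq> H \<Longrightarrow> V \<subseteq> \<Union>H \<Longrightarrow> card (\<Union>H - V) = n
     \<Longrightarrow> \<exists>T\<subseteq>H. tr (\<Union>H) T" for n
  proof (induction n)
    case 0
    then have "V = \<Union>H" using finU by auto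
    thus ?case using 0 by auto
  next
    case (Suc n)
    then have "\<Union>H - V \<noteq> {}" by auto
    then obtain z where z: "z \<in> \<Union>H" "z \<notin> V" by auto
    have "V \<noteq> {}" using Suc.prems(1) unfolding tr_def by auto
    then obtain a where a: "a \<in> V" by auto
    then have "(adj_in H)\<^sup>*\<^sup>* a z" using conn Suc.prems z by auto
    then obtain x y where xy: "adj_in H x y" "x \<in> V" "y \<notin> V"
      using crossing[of "adj_in H" a z "\<lambda>x. x \<in> V"] a z by blast
    have yH: "y \<in> \<Union>H" "{x,y} \<in> H" using xy by (auto simp: adj_in_def)
    have t: "tr (insert y V) (insert {x,y} T)" using tr_leaf Suc.prems xy by metis
    have "\<Union>H - insert y V = (\<Union>H - V) - {y}" by auto
    moreover have "y \<in> \<Union>H - V" using yH xy by auto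
    ultimately have "card (\<Union>H - insert y V) = n"
      using Suc.prems(4) finU by (simp add: card_Diff_singleton)
    moreover have "insert {x,y} T \<subseteq> H" using Suc.prems(2) yH by blast
    moreover have "insert y V \<subseteq> \<Union>H" using Suc.prems(3) yH by blast
    ultimately show ?case using Suc.IH[OF t] by blast
  qed
  have "tr {r} {}" by (rule tr_single)
  thus ?thesis using main[of "{r}" "{}"] r by auto
qed



definition vert :: "nat list \<Rightarrow> nat list \<Rightarrow> bool" where
  "vert ns x \<longleftrightarrow> length x = length ns \<and> (\<forall>i<length ns. x!i < ns!i)"

definition erel :: "nat list \<Rightarrow> nat list \<Rightarrow> nat list \<Rightarrow> bool" where
  "erel ns x y \<longleftrightarrow> vert ns x \<and> vert ns y \<and>
     (\<exists>i<length ns. (y!i = Suc (x!i) \<or> x!i = Suc (y!i)) \<and> (\<forall>j<length ns. j \<noteq> i \<longrightarrow> x!j = y!j))"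

lemma pg_edge: "p < n \<Longrightarrow> q < n \<Longrightarrow> (\<exists>a. {p,q} = {a, Suc a} \<and> Suc a < n) = (q = Suc p \<or> p = Suc q)"
  by (auto simp: doubleton_eq_iff)

lemma G_fst: "fst (cart_prod (map path_graph ns)) = {x. vert ns x}"
  by (auto simp: cart_prod_def path_graph_def vert_def)

lemma fst_part: "(length xs = length ns \<and> (\<forall>i<length ns. xs ! i \<in> fst (map path_graph ns ! i))) = vert ns xs"
  by (simp add: vert_def path_graph_def)

lemma snd_part:
  assumes "vert ns xs" "vert ns ys" "i < length ns"
  shows "({xs ! i, ys ! i} \<in> snd (map path_graph ns ! i)) = (ys!i = Suc (xs!i) \<or> xs!i = Suc (ys!i))"
proof -
  have "xs!i < ns!i" "ys!i < ns!i" using assms unfolding vert_def by blast+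
  then show ?thesis using assms(3) pg_edge[of "xs!i" "ns!i" "ys!i"] by (simp add: path_graph_def)
qed

lemma G_snd: "snd (cart_prod (map path_graph ns)) = {{x,y}| x y. erel ns x y}"
proof -
  have key: "(length xs = length ns \<and> (\<forall>i<length ns. xs ! i \<in> fst (map path_graph ns ! i)) \<and>
        length ys = length ns \<and> (\<forall>i<length ns. ys ! i \<in> fst (map path_graph ns ! i)) \<and>
        (\<exists>i<length ns. {xs ! i, ys ! i} \<in> snd (map path_graph ns ! i) \<and>
            (\<forall>j<length ns. j \<noteq> i \<longrightarrow> xs ! j = ys ! j))) = erel ns xs ys" for xs ys
  proof (cases "vert ns xs \<and> vert ns ys")
    case True
    then have ex: "(\<exists>i<length ns. {xs ! i, ys ! i} \<in> snd (map path_graph ns ! i) \<and>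
            (\<forall>j<length ns. j \<noteq> i \<longrightarrow> xs ! j = ys ! j)) = (\<exists>i<length ns. (ys!i = Suc (xs!i) \<or> xs!i = Suc (ys!i)) \<and>
            (\<forall>j<length ns. j \<noteq> i \<longrightarrow> xs ! j = ys ! j))" using snd_part by blast
    show ?thesis using True fst_part[of xs ns] fst_part[of ys ns] unfolding erel_def ex by blast
  next
    case False
    then show ?thesis using fst_part[of xs ns] fst_part[of ys ns] unfolding erel_def by blast
  qed
  show ?thesis unfolding cart_prod_def snd_conv length_map by (simp only: key)
qed

lemma erel_sym: "erel ns x y \<Longrightarrow> erel ns y x"
  unfolding erel_def by (metis (no_types, lifting))

lemma erel_neq: "erel ns x y \<Longrightarrow> x \<noteq> y"
  unfolding erel_def by auto

lemma edge_erel: "{x,y} \<in> snd (cart_prod (map path_graph ns)) \<Longrightarrow> erel ns x y"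
proof -
  assume "{x,y} \<in> snd (cart_prod (map path_graph ns))"
  then obtain a b where "{x,y} = {a,b}" "erel ns a b" unfolding G_snd by blast
  then show ?thesis by (metis doubleton_eq_iff erel_sym)
qed

definition dim :: "nat list set \<Rightarrow> nat" where
  "dim e = (LEAST i. \<exists>x\<in>e. \<exists>y\<in>e. x!i \<noteq> y!i)"

definition low :: "nat list set \<Rightarrow> nat" where
  "low e = Min ((\<lambda>x. x ! dim e) ` e)"

lemma dimlow:
  assumes "i < length x" "length y = length x" "x!i \<noteq> y!i" "\<forall>j<length x. j \<noteq> i \<longrightarrow> x!j = y!j"
  shows "dim {x,y} = i \<and> low {x,y} = min (x!i) (y!i)"
proof -
  have d: "dim {x,y} = i"
    unfolding dim_def
  proof (rule Least_equality)
    show "\<exists>a\<in>{x,y}. \<exists>b\<in>{x,y}. a!i \<noteq> b!i" using assms by auto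
  next
    fix l assume "\<exists>a\<in>{x,y}. \<exists>b\<in>{x,y}. a!l \<noteq> b!l"
    then have "x!l \<noteq> y!l" by (metis empty_iff insert_iff)
    show "i \<le> l"
    proof (rule ccontr)
      assume "\<not> i \<le> l"
      then have "l < length x" "l \<noteq> i" using assms(1) by auto
      then show False using assms(4) \<open>x!l \<noteq> y!l\<close> by blast
    qed
  qed
  have "low {x,y} = Min {x!i, y!i}" unfolding low_def d by simp
  also have "\<dots> = min (x!i) (y!i)" by simp
  finally show ?thesis using d by simp
qed

lemma erel_dimlow:
  assumes "erel ns x y"
  shows "\<exists>i<length ns. (y!i = Suc (x!i) \<or> x!i = Suc (y!i)) \<and> dim {x,y} = i \<and> low {x,y} = min (x!i) (y!i)
     \<and> max (x!i) (y!i) < ns!i \<and> (\<forall>j<length ns. j \<noteq> i \<longrightarrow> x!j = y!j)"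
proof -
  obtain i where i: "i<length ns" "y!i = Suc (x!i) \<or> x!i = Suc (y!i)" "\<forall>j<length ns. j \<noteq> i \<longrightarrow> x!j = y!j"
    using assms unfolding erel_def by (elim conjE exE) auto
  have vv: "vert ns x" "vert ns y" using assms unfolding erel_def by blast+
  have l: "length x = length ns" "length y = length ns" "x!i < ns!i" "y!i < ns!i"
    using vv i(1) unfolding vert_def by blast+
  have ne: "x!i \<noteq> y!i" using i(2) by auto
  have "dim {x,y} = i \<and> low {x,y} = min (x!i) (y!i)"
    using dimlow[of i x y] i(1,3) l(1,2) ne by simp
  moreover have "max (x!i) (y!i) < ns!i" using l(3,4) by simp
  ultimately show ?thesis using i(1,2,3) by blast
qed



lemma lower:
  assumes k2: "length ns \<ge> 2" and n3: "\<forall>i<length ns. ns!i \<ge> 2"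
    and col: "three_rainbow_colouring (cart_prod (map path_graph ns)) m c"
  shows "(\<Sum>i<length ns. ns!i - 1) \<le> m"
proof -
  let ?G = "cart_prod (map path_graph ns)"
  let ?k = "length ns"
  define u where "u = replicate ?k (0::nat)"
  define v where "v = u[0 := ns!0 - 1]"
  define w where "w = (map (\<lambda>n. n - 1) ns)[0 := 0]"
  have lu: "length u = ?k" and lv: "length v = ?k" and lw: "length w = ?k"
    by (simp_all add: u_def v_def w_def)
  have ui: "u!i = 0" if "i < ?k" for i using that by (simp add: u_def)
  have k0: "0 < ?k" "1 < ?k" using k2 by auto
  have v0: "v!0 = ns!0 - 1" using k0 by (simp add: v_def u_def)
  have vi: "v!i = 0" if "i < ?k" "i \<noteq> 0" for i using that by (simp add: v_def u_def)
  have w0: "w!0 = 0" using k0 by (simp add: w_def)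
  have wi: "w!i = ns!i - 1" if "i < ?k" "i \<noteq> 0" for i using that by (simp add: w_def)
  have pos: "ns!i - 1 < ns!i" "0 < ns!i - 1" if "i < ?k" for i using n3 that by auto
  have np: "0 < ns!i" if "i < ?k" for i using n3 that by fastforce
  have vu: "vert ns u" unfolding vert_def using lu ui n3 by fastforce
  have vv: "vert ns v" unfolding vert_def
  proof (intro conjI allI impI)
    fix i assume "i < ?k" then show "v!i < ns!i" using v0 vi pos np by (cases "i = 0") auto
  qed (rule lv)
  have vw: "vert ns w" unfolding vert_def
  proof (intro conjI allI impI)
    fix i assume "i < ?k" then show "w!i < ns!i" using w0 wi pos np by (cases "i = 0") auto
  qed (rule lw)
  have d1: "u \<noteq> v" using ui[OF k0(1)] v0 pos(2)[OF k0(1)] by auto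
  have d2: "u \<noteq> w" using ui[OF k0(2)] wi[OF k0(2)] pos(2)[OF k0(2)] by auto
  have d3: "v \<noteq> w" using w0 v0 pos(2)[OF k0(1)] by auto
  have S3: "card {u,v,w} = 3" using d1 d2 d3 by simp
  have Ssub: "{u,v,w} \<subseteq> fst ?G" unfolding G_fst using vu vv vw by blast
  obtain T where T: "T \<subseteq> snd ?G" "is_tree T" "{u,v,w} \<subseteq> \<Union>T" "inj_on c T"
    using col S3 Ssub unfolding three_rainbow_colouring_def by blast
  have conn: "\<forall>a\<in>\<Union>T. \<forall>b\<in>\<Union>T. (adj_in T)\<^sup>*\<^sup>* a b" and finT: "finite T"
    using T(2) unfolding is_tree_def by blast+
  define Sig where "Sig = (SIGMA i:{..<?k}. {..<ns!i - 1})"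
  have cover: "Sig \<subseteq> (\<lambda>e. (dim e, low e)) ` T"
  proof
    fix p assume "p \<in> Sig"
    then obtain i j where p: "p = (i,j)" "i < ?k" "j < ns!i - 1" unfolding Sig_def by blast
    obtain a b where ab: "a \<in> \<Union>T" "b \<in> \<Union>T" "a!i = 0" "b!i = ns!i - 1"
    proof (cases "i = 0")
      case True
      then show ?thesis using that[of u v] T(3) ui[OF p(2)] v0 by auto
    next
      case False
      then show ?thesis using that[of u w] T(3) ui[OF p(2)] wi[OF p(2) False] by auto
    qed
    have "(adj_in T)\<^sup>*\<^sup>* a b" using conn ab by blast
    then obtain x y where xy: "adj_in T x y" "x!i \<le> j" "\<not> y!i \<le> j"
      using crossing[of "adj_in T" a b "\<lambda>x. x!i \<le> j"] ab p by auto
    have eT: "{x,y} \<in> T" using xy(1) unfolding adj_in_def by blast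
    then have "erel ns x y" using T(1) edge_erel by blast
    then obtain i' where i': "i' < ?k" "y!i' = Suc (x!i') \<or> x!i' = Suc (y!i')" "dim {x,y} = i'"
       "low {x,y} = min (x!i') (y!i')" "\<forall>j<?k. j \<noteq> i' \<longrightarrow> x!j = y!j"
      using erel_dimlow by blast
    have ii: "i' = i" using i'(5) xy(2,3) p(2) by (metis le_trans nat_le_linear)
    have "y!i = Suc (x!i)" using i'(2) ii xy(2,3) by auto
    then have "x!i = j" using xy(2,3) by auto
    then have "(dim {x,y}, low {x,y}) = p" using i' ii p(1) \<open>y!i = Suc (x!i)\<close> by simp
    then show "p \<in> (\<lambda>e. (dim e, low e)) ` T" using eT by force
  qed
  have "card Sig \<le> card ((\<lambda>e. (dim e, low e)) ` T)"
    by (rule card_mono) (use finT cover in auto)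
  also have "\<dots> \<le> card T" using finT by (rule card_image_le)
  also have "card T = card (c ` T)" using T(4) by (simp add: card_image)
  also have "\<dots> \<le> card {..<m}"
  proof (rule card_mono)
    show "c ` T \<subseteq> {..<m}" using col T(1) unfolding three_rainbow_colouring_def by auto
  qed simp
  also have "\<dots> = m" by simp
  finally have "card Sig \<le> m" .
  moreover have "card Sig = (\<Sum>i<?k. ns!i - 1)" unfolding Sig_def by simp
  ultimately show ?thesis by simp
qed



definition lo :: "nat list \<Rightarrow> nat list \<Rightarrow> nat \<Rightarrow> nat" where "lo s t i = min (s!i) (t!i)"
definition hi :: "nat list \<Rightarrow> nat list \<Rightarrow> nat \<Rightarrow> nat" where "hi s t i = max (s!i) (t!i)"

definition zz :: "nat list \<Rightarrow> nat list \<Rightarrow> nat \<Rightarrow> nat \<Rightarrow> nat list" where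
  "zz s t i j = map (\<lambda>l. if l < i then t!l else if l = i then j else s!l) [0..<length s]"

definition PP :: "nat list \<Rightarrow> nat list \<Rightarrow> nat list set set" where
  "PP s t = (\<lambda>(i,j). {zz s t i j, zz s t i (Suc j)}) ` (SIGMA i:{..<length s}. {lo s t i..<hi s t i})"

lemma zz_len[simp]: "length (zz s t i j) = length s"
  by (simp add: zz_def)

lemma zz_nth: "l < length s \<Longrightarrow> zz s t i j ! l = (if l < i then t!l else if l = i then j else s!l)"
  by (simp add: zz_def)

lemma PP_elem: "e \<in> PP s t \<Longrightarrow> \<exists>i j. i < length s \<and> lo s t i \<le> j \<and> j < hi s t i \<and> e = {zz s t i j, zz s t i (Suc j)}"
proof -
  assume "e \<in> PP s t"
  then obtain p where p: "p \<in> (SIGMA i:{..<length s}. {lo s t i..<hi s t i})"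
      "e = (\<lambda>(i,j). {zz s t i j, zz s t i (Suc j)}) p" unfolding PP_def by (rule imageE)
  obtain i j where "p = (i,j)" by (cases p)
  then have "i < length s \<and> lo s t i \<le> j \<and> j < hi s t i \<and> e = {zz s t i j, zz s t i (Suc j)}" using p by simp
  then show ?thesis by blast
qed

lemma PP_intro: "i < length s \<Longrightarrow> lo s t i \<le> j \<Longrightarrow> j < hi s t i \<Longrightarrow> {zz s t i j, zz s t i (Suc j)} \<in> PP s t"
  unfolding PP_def by force

lemma PP_finite: "finite (PP s t)"
  unfolding PP_def by simp

lemma zz_ne: "i < length s \<Longrightarrow> zz s t i j \<noteq> zz s t i (Suc j)"
proof
  assume i: "i < length s" and "zz s t i j = zz s t i (Suc j)"
  then have "zz s t i j ! i = zz s t i (Suc j) ! i" by simp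
  then show False using zz_nth[OF i] by simp
qed

lemma zz_erel:
  assumes vs: "vert ns s" and vt: "vert ns t" and i: "i < length ns" and j: "j < hi s t i"
  shows "erel ns (zz s t i j) (zz s t i (Suc j))"
proof -
  have ls: "length s = length ns" and lt: "length t = length ns"
    using vs vt unfolding vert_def by blast+
  have hb: "hi s t i < ns!i" using vs vt i unfolding vert_def hi_def by simp
  have "vert ns (zz s t i jj)" if "jj \<le> hi s t i" for jj
    unfolding vert_def
  proof (intro conjI allI impI)
    show "length (zz s t i jj) = length ns" using ls by simp
    fix l assume l: "l < length ns"
    have "s!l < ns!l" "t!l < ns!l" using vs vt l unfolding vert_def by blast+
    then show "zz s t i jj ! l < ns!l" using zz_nth[of l s t i jj] l ls that hb by auto
  qed
  then have v1: "vert ns (zz s t i j)" and v2: "vert ns (zz s t i (Suc j))" using j by auto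
  have "zz s t i (Suc j) ! i = Suc (zz s t i j ! i)" using zz_nth i ls by simp
  moreover have "\<forall>l<length ns. l \<noteq> i \<longrightarrow> zz s t i j ! l = zz s t i (Suc j) ! l"
    using zz_nth ls by simp
  ultimately show ?thesis unfolding erel_def using v1 v2 i by blast
qed

lemma PP_sub:
  assumes "vert ns s" "vert ns t"
  shows "PP s t \<subseteq> snd (cart_prod (map path_graph ns))"
proof
  fix e assume "e \<in> PP s t"
  then obtain i j where ij: "i < length s" "lo s t i \<le> j" "j < hi s t i" "e = {zz s t i j, zz s t i (Suc j)}"
    using PP_elem by blast
  have "length s = length ns" using assms unfolding vert_def by blast
  then have "erel ns (zz s t i j) (zz s t i (Suc j))" using zz_erel assms ij by simp
  then show "e \<in> snd (cart_prod (map path_graph ns))" unfolding G_snd using ij(4) by blast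
qed

lemma PP_dimlow:
  assumes "i < length s"
  shows "dim {zz s t i j, zz s t i (Suc j)} = i \<and> low {zz s t i j, zz s t i (Suc j)} = j"
proof -
  have "dim {zz s t i j, zz s t i (Suc j)} = i \<and> low {zz s t i j, zz s t i (Suc j)} = min (zz s t i j ! i) (zz s t i (Suc j) ! i)"
    by (rule dimlow) (use assms zz_nth in auto)
  then show ?thesis using assms zz_nth by simp
qed

lemma zz_conn1:
  assumes "i < length s"
  shows "lo s t i \<le> j \<Longrightarrow> j \<le> hi s t i \<Longrightarrow> (adj_in (PP s t))\<^sup>*\<^sup>* (zz s t i (lo s t i)) (zz s t i j)"
proof (induction j)
  case 0
  then show ?case by simp
next
  case (Suc j)
  show ?case
  proof (cases "Suc j = lo s t i")
    case True then show ?thesis by simp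
  next
    case False
    then have j: "lo s t i \<le> j" "j < hi s t i" using Suc.prems by auto
    then have "(adj_in (PP s t))\<^sup>*\<^sup>* (zz s t i (lo s t i)) (zz s t i j)" using Suc.IH by simp
    moreover have "adj_in (PP s t) (zz s t i j) (zz s t i (Suc j))"
      unfolding adj_in_def using PP_intro[OF assms j] zz_ne[OF assms] by blast
    ultimately show ?thesis by (rule rtranclp.rtrancl_into_rtrancl)
  qed
qed

lemma zz_conn2:
  assumes "i < length s" "lo s t i \<le> a" "a \<le> hi s t i" "lo s t i \<le> b" "b \<le> hi s t i"
  shows "(adj_in (PP s t))\<^sup>*\<^sup>* (zz s t i a) (zz s t i b)"
proof -
  have "(adj_in (PP s t))\<^sup>*\<^sup>* (zz s t i a) (zz s t i (lo s t i))"
    using zz_conn1[OF assms(1,2,3)] by (rule rtr_sym)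
  then show ?thesis using zz_conn1[OF assms(1,4,5)] by (rule rtranclp_trans)
qed

lemma zz_conn3:
  assumes lt: "length t = length s"
  shows "i < length s \<Longrightarrow> lo s t i \<le> j \<Longrightarrow> j \<le> hi s t i \<Longrightarrow> (adj_in (PP s t))\<^sup>*\<^sup>* s (zz s t i j)"
proof (induction i arbitrary: j)
  case 0
  have "zz s t 0 (s!0) = s" by (rule nth_equalityI) (auto simp: zz_nth)
  moreover have "lo s t 0 \<le> s!0" "s!0 \<le> hi s t 0" by (auto simp: lo_def hi_def)
  ultimately show ?case using zz_conn2[OF 0(1) _ _ 0(2,3), of "s!0"] by simp
next
  case (Suc i)
  have "zz s t (Suc i) (s!Suc i) = zz s t i (t!i)" by (rule nth_equalityI) (auto simp: zz_nth)
  moreover have "lo s t i \<le> t!i" "t!i \<le> hi s t i" by (auto simp: lo_def hi_def)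
  moreover have "lo s t (Suc i) \<le> s!Suc i" "s!Suc i \<le> hi s t (Suc i)" by (auto simp: lo_def hi_def)
  ultimately show ?case using Suc.IH[of "t!i"] Suc.prems zz_conn2[OF Suc.prems(1) _ _ Suc.prems(2,3), of "s!Suc i"]
    by (metis Suc_lessD rtranclp_trans)
qed

lemma PP_conn:
  assumes lt: "length t = length s" and k: "0 < length s"
  shows "(\<forall>x\<in>\<Union>(PP s t). (adj_in (PP s t))\<^sup>*\<^sup>* s x) \<and> (adj_in (PP s t))\<^sup>*\<^sup>* s t"
proof (intro conjI ballI)
  fix x assume "x \<in> \<Union>(PP s t)"
  then obtain e where e: "e \<in> PP s t" "x \<in> e" by blast
  then obtain i j where ij: "i < length s" "lo s t i \<le> j" "j < hi s t i" "e = {zz s t i j, zz s t i (Suc j)}"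
    using PP_elem by blast
  then have "x = zz s t i j \<or> x = zz s t i (Suc j)" using e by blast
  then show "(adj_in (PP s t))\<^sup>*\<^sup>* s x" using zz_conn3[OF lt ij(1)] ij by force
next
  let ?l = "length s - 1"
  have eq: "zz s t ?l (t!?l) = t" by (rule nth_equalityI) (use lt k in \<open>auto simp: zz_nth\<close>)
  have b: "lo s t ?l \<le> t!?l" "t!?l \<le> hi s t ?l" by (auto simp: lo_def hi_def)
  have l: "?l < length s" using k by simp
  have "(adj_in (PP s t))\<^sup>*\<^sup>* s (zz s t ?l (t!?l))" by (rule zz_conn3[OF lt l b])
  from this[unfolded eq] show "(adj_in (PP s t))\<^sup>*\<^sup>* s t" .
qed

lemma PP_ends:
  assumes "length t = length s" "0 < length s" "s \<noteq> t"
  shows "s \<in> \<Union>(PP s t) \<and> t \<in> \<Union>(PP s t)"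
proof -
  have "(adj_in (PP s t))\<^sup>*\<^sup>* s t" using PP_conn[OF assms(1,2)] by (rule conjunct2)
  then have "s = t \<or> (s \<in> \<Union>(PP s t) \<and> t \<in> \<Union>(PP s t))" by (rule rtr_in)
  then show ?thesis using assms(3) by simp
qed

definition med :: "nat \<Rightarrow> nat \<Rightarrow> nat \<Rightarrow> nat" where
  "med a b c = max (min a b) (min (max a b) c)"

lemma med_in: "med a b c = a \<or> med a b c = b \<or> med a b c = c"
  unfolding med_def by (simp add: max_def min_def)

lemma med_disj:
  assumes "M = med a b c"
    and "(p = a \<and> q = b) \<or> (p = b \<and> q = a) \<or> (p = a \<and> q = c) \<or> (p = c \<and> q = a) \<or> (p = b \<and> q = c) \<or> (p = c \<and> q = b)"
  shows "\<not> (min M p \<le> j \<and> j < max M p \<and> min M q \<le> j \<and> j < max M q)"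
  using assms unfolding med_def min_def max_def by (auto split: if_splits)



lemma tree_exists:
  assumes k: "0 < length ns"
    and vu: "vert ns u" and vv: "vert ns v" and vw: "vert ns w"
    and d: "u \<noteq> v" "u \<noteq> w" "v \<noteq> w"
    and inj: "inj_on f (SIGMA i:{..<length ns}. {..<ns!i - 1})"
  shows "\<exists>T\<subseteq>snd (cart_prod (map path_graph ns)). is_tree T \<and> {u,v,w} \<subseteq> \<Union>T \<and> inj_on (\<lambda>e. f (dim e, low e)) T"
proof -
  let ?G = "cart_prod (map path_graph ns)"
  let ?k = "length ns"
  define m where "m = map (\<lambda>i. med (u!i) (v!i) (w!i)) [0..<?k]"
  have lu: "length u = ?k" and lv: "length v = ?k" and lw: "length w = ?k"
    using vu vv vw unfolding vert_def by blast+
  have lm: "length m = ?k" unfolding m_def by simp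
  have mi: "m!i = med (u!i) (v!i) (w!i)" if "i < ?k" for i using that unfolding m_def by simp
  have vm: "vert ns m" unfolding vert_def
  proof (intro conjI allI impI)
    show "length m = ?k" by (rule lm)
    fix i assume i: "i < ?k"
    have "u!i < ns!i" "v!i < ns!i" "w!i < ns!i" using vu vv vw i unfolding vert_def by blast+
    then show "m!i < ns!i" using mi[OF i] med_in[of "u!i" "v!i" "w!i"] by auto
  qed
  define H where "H = PP m u \<union> PP m v \<union> PP m w"
  have Hsub: "H \<subseteq> snd ?G" unfolding H_def using PP_sub[OF vm vu] PP_sub[OF vm vv] PP_sub[OF vm vw] by blast
  have finH: "finite H" unfolding H_def using PP_finite by blast
  have c2: "\<forall>e\<in>H. card e = 2"
  proof
    fix e assume "e \<in> H"
    then have "e \<in> snd ?G" using Hsub by blast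
    then obtain x y where "e = {x,y}" "erel ns x y" unfolding G_snd by blast
    then show "card e = 2" using erel_neq by auto
  qed
  have km: "0 < length m" using lm k by simp
  have conn_t: "(adj_in H)\<^sup>*\<^sup>* m x" if "t \<in> {u,v,w}" "x \<in> \<Union>(PP m t)" for t x
  proof -
    have "length t = length m" using that(1) lu lv lw lm by auto
    then have "\<forall>x\<in>\<Union>(PP m t). (adj_in (PP m t))\<^sup>*\<^sup>* m x" using PP_conn[of t m] km by simp
    then have r: "(adj_in (PP m t))\<^sup>*\<^sup>* m x" using that(2) by (rule bspec)
    have "PP m t \<subseteq> H" using that(1) unfolding H_def by blast
    then show ?thesis using r by (rule rtr_mono)
  qed
  have connm: "(adj_in H)\<^sup>*\<^sup>* m x" if "x \<in> \<Union>H" for x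
  proof -
    have "x \<in> \<Union>(PP m u) \<or> x \<in> \<Union>(PP m v) \<or> x \<in> \<Union>(PP m w)" using that unfolding H_def by blast
    then show ?thesis
    proof (elim disjE)
      assume "x \<in> \<Union>(PP m u)" then show ?thesis by (rule conn_t[rotated]) simp
    next
      assume "x \<in> \<Union>(PP m v)" then show ?thesis by (rule conn_t[rotated]) simp
    next
      assume "x \<in> \<Union>(PP m w)" then show ?thesis by (rule conn_t[rotated]) simp
    qed
  qed
  have conn: "\<forall>x\<in>\<Union>H. \<forall>y\<in>\<Union>H. (adj_in H)\<^sup>*\<^sup>* x y"
  proof (intro ballI)
    fix x y assume "x \<in> \<Union>H" "y \<in> \<Union>H"
    then have "(adj_in H)\<^sup>*\<^sup>* x m" "(adj_in H)\<^sup>*\<^sup>* m y" using connm[THEN rtr_sym] connm by simp_all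
    then show "(adj_in H)\<^sup>*\<^sup>* x y" by (rule rtranclp_trans)
  qed
  have ends: "m \<in> \<Union>H \<and> t \<in> \<Union>H" if "t \<in> {u,v,w}" "t \<noteq> m" for t
  proof -
    have "length t = length m" using that(1) lu lv lw lm by auto
    then have "m \<in> \<Union>(PP m t) \<and> t \<in> \<Union>(PP m t)" using PP_ends[of t m] km that(2) by metis
    moreover have "PP m t \<subseteq> H" using that(1) unfolding H_def by blast
    ultimately show ?thesis by blast
  qed
  have Sin: "{u,v,w} \<subseteq> \<Union>H"
  proof -
    have mH: "m \<in> \<Union>H"
    proof (cases "u = m")
      case True
      then have "v \<noteq> m" using d(1) by simp
      then show ?thesis using ends[of v] by simp
    next
      case False
      then show ?thesis using ends[of u] by simp
    qed
    have "t \<in> \<Union>H" if "t \<in> {u,v,w}" for t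
    proof (cases "t = m")
      case True then show ?thesis using mH by simp
    next
      case False then show ?thesis using ends[OF that False] by simp
    qed
    then show ?thesis by blast
  qed
  have uH: "u \<in> \<Union>H" using Sin by blast
  obtain T where T: "T \<subseteq> H" "tr (\<Union>H) T" using spanning[OF finH c2 conn uH] by blast
  have finU: "finite (\<Union>H)" using T(2) unfolding tr_def by blast
  have "3 \<le> card (\<Union>H)"
  proof -
    have "card {u,v,w} = 3" using d by simp
    then show ?thesis using card_mono[OF finU Sin] by simp
  qed
  then have Tne: "T \<noteq> {}" using T(2) unfolding tr_def by auto
  have Tt: "is_tree T \<and> \<Union>T = \<Union>H" using tr_is_tree[OF T(2) Tne] .
  have injH: "inj_on (\<lambda>e. f (dim e, low e)) H"
  proof (rule inj_onI)
    fix e1 e2 assume e1: "e1 \<in> H" and e2: "e2 \<in> H" and eq: "f (dim e1, low e1) = f (dim e2, low e2)"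
    obtain t1 where t1: "t1 \<in> {u,v,w}" "e1 \<in> PP m t1" using e1 unfolding H_def by blast
    obtain t2 where t2: "t2 \<in> {u,v,w}" "e2 \<in> PP m t2" using e2 unfolding H_def by blast
    obtain i1 j1 where ij1: "i1 < length m" "lo m t1 i1 \<le> j1" "j1 < hi m t1 i1" "e1 = {zz m t1 i1 j1, zz m t1 i1 (Suc j1)}"
      using PP_elem[OF t1(2)] by blast
    obtain i2 j2 where ij2: "i2 < length m" "lo m t2 i2 \<le> j2" "j2 < hi m t2 i2" "e2 = {zz m t2 i2 j2, zz m t2 i2 (Suc j2)}"
      using PP_elem[OF t2(2)] by blast
    have dl1: "dim e1 = i1" "low e1 = j1" using PP_dimlow[OF ij1(1)] ij1(4) by simp_all
    have dl2: "dim e2 = i2" "low e2 = j2" using PP_dimlow[OF ij2(1)] ij2(4) by simp_all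
    have tb: "t!i < ns!i" if "t \<in> {u,v,w}" "i < ?k" for t i
      using that vu vv vw unfolding vert_def by blast
    have mb: "m!i < ns!i" if "i < ?k" for i using vm that unfolding vert_def by blast
    have s1: "(i1,j1) \<in> (SIGMA i:{..<length ns}. {..<ns!i - 1})"
      using ij1(1,3) lm tb[OF t1(1), of i1] mb[of i1] unfolding hi_def by auto
    have s2: "(i2,j2) \<in> (SIGMA i:{..<length ns}. {..<ns!i - 1})"
      using ij2(1,3) lm tb[OF t2(1), of i2] mb[of i2] unfolding hi_def by auto
    have "(i1,j1) = (i2,j2)" using inj s1 s2 eq dl1 dl2 unfolding inj_on_def by metis
    then have ii: "i2 = i1" "j2 = j1" by simp_all
    show "e1 = e2"
    proof (cases "t1 = t2")
      case True then show ?thesis using ij1(4) ij2(4) ii by simp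
    next
      case False
      have pat: "(t1 = u \<and> t2 = v) \<or> (t1 = v \<and> t2 = u) \<or> (t1 = u \<and> t2 = w) \<or> (t1 = w \<and> t2 = u) \<or> (t1 = v \<and> t2 = w) \<or> (t1 = w \<and> t2 = v)"
        using t1(1) t2(1) False by blast
      let ?a = "u!i1" and ?b = "v!i1" and ?c = "w!i1"
      have pat2: "(t1!i1 = ?a \<and> t2!i1 = ?b) \<or> (t1!i1 = ?b \<and> t2!i1 = ?a) \<or> (t1!i1 = ?a \<and> t2!i1 = ?c) \<or> (t1!i1 = ?c \<and> t2!i1 = ?a) \<or> (t1!i1 = ?b \<and> t2!i1 = ?c) \<or> (t1!i1 = ?c \<and> t2!i1 = ?b)"
        using pat by (elim disjE) simp_all
      have M: "m!i1 = med ?a ?b ?c" using mi ij1(1) lm by simp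
      have "\<not> (min (m!i1) (t1!i1) \<le> j1 \<and> j1 < max (m!i1) (t1!i1) \<and> min (m!i1) (t2!i1) \<le> j1 \<and> j1 < max (m!i1) (t2!i1))"
        by (rule med_disj[OF M pat2])
      moreover have "min (m!i1) (t1!i1) \<le> j1 \<and> j1 < max (m!i1) (t1!i1) \<and> min (m!i1) (t2!i1) \<le> j1 \<and> j1 < max (m!i1) (t2!i1)"
        using ij1(2,3) ij2(2,3) ii unfolding lo_def hi_def by simp
      ultimately show ?thesis by contradiction
    qed
  qed
  show ?thesis
  proof (intro exI conjI)
    show "T \<subseteq> snd ?G" using T(1) Hsub by blast
    show "is_tree T" using Tt by blast
    show "{u,v,w} \<subseteq> \<Union>T" using Tt Sin by simp
    show "inj_on (\<lambda>e. f (dim e, low e)) T" using injH T(1) by (rule inj_on_subset)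
  qed
qed



lemma upper:
  assumes k: "0 < length ns"
  shows "\<exists>c. three_rainbow_colouring (cart_prod (map path_graph ns)) (\<Sum>i<length ns. ns!i - 1) c"
proof -
  let ?G = "cart_prod (map path_graph ns)"
  define Sig where "Sig = (SIGMA i:{..<length ns}. {..<ns!i - 1})"
  have finS: "finite Sig" unfolding Sig_def by (rule finite_SigmaI) simp_all
  have cS: "card Sig = (\<Sum>i<length ns. ns!i - 1)" unfolding Sig_def by simp
  obtain f where f: "bij_betw f Sig {0..<card Sig}" using ex_bij_betw_finite_nat[OF finS] by blast
  have injf: "inj_on f Sig" using f by (rule bij_betw_imp_inj_on)
  define c where "c = (\<lambda>e. f (dim e, low e))"
  have p1: "\<forall>e\<in>snd ?G. c e < (\<Sum>i<length ns. ns!i - 1)"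
  proof
    fix e assume "e \<in> snd ?G"
    then obtain x y where xy: "e = {x,y}" "erel ns x y" unfolding G_snd by blast
    obtain i where i: "i<length ns" "y!i = Suc (x!i) \<or> x!i = Suc (y!i)" "dim {x,y} = i" "low {x,y} = min (x!i) (y!i)"
      "max (x!i) (y!i) < ns!i"
      using erel_dimlow[OF xy(2)] by blast
    have "min (x!i) (y!i) < ns!i - 1" using i(2,5) by auto
    then have "(dim e, low e) \<in> Sig" unfolding Sig_def using i(1,3,4) xy(1) by simp
    then have "f (dim e, low e) \<in> {0..<card Sig}" using bij_betw_apply[OF f] by blast
    then show "c e < (\<Sum>i<length ns. ns!i - 1)" unfolding c_def cS by simp
  qed
  have p2: "\<forall>S\<subseteq>fst ?G. card S = 3 \<longrightarrow> (\<exists>T\<subseteq>snd ?G. is_tree T \<and> S \<subseteq> \<Union>T \<and> inj_on c T)"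
  proof (intro allI impI)
    fix S assume S: "S \<subseteq> fst ?G" "card S = 3"
    then obtain u v w where uvw: "S = {u,v,w}" "u \<noteq> v" "v \<noteq> w" "u \<noteq> w" by (auto simp: card_3_iff)
    have "vert ns u" "vert ns v" "vert ns w" using S(1) uvw(1) unfolding G_fst by auto
    then show "\<exists>T\<subseteq>snd ?G. is_tree T \<and> S \<subseteq> \<Union>T \<and> inj_on c T"
      using tree_exists[OF k _ _ _ uvw(2,4,3), of f] injf uvw(1) unfolding c_def Sig_def by blast
  qed
  show ?thesis unfolding three_rainbow_colouring_def using p1 p2 by blast
qed

theorem corollary1:
  fixes ns :: "nat list"
  assumes "length ns \<ge> 2"
    and "\<forall>i<length ns. ns ! i \<ge> 3"
  shows "rx3 (cart_prod (map path_graph ns)) = sum_list ns - length ns"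
proof -
  let ?N = "\<Sum>i<length ns. ns!i - 1"
  have n2: "\<forall>i<length ns. ns!i \<ge> 2" using assms(2) by fastforce
  have "sum_list ns = (\<Sum>i<length ns. ns!i)" by (simp add: sum_list_sum_nth atLeast0LessThan)
  also have "\<dots> = (\<Sum>i<length ns. (ns!i - 1) + 1)"
    by (rule sum.cong) (use assms(2) in fastforce)+
  also have "\<dots> = ?N + length ns" by (simp only: sum.distrib) simp
  finally have sumeq: "sum_list ns - length ns = ?N" by simp
  have k: "0 < length ns" using assms(1) by linarith
  obtain c where c: "three_rainbow_colouring (cart_prod (map path_graph ns)) ?N c" using upper[OF k] by blast
  have "rx3 (cart_prod (map path_graph ns)) = ?N"
    unfolding rx3_def
  proof (rule Least_equality)
    show "\<exists>c. three_rainbow_colouring (cart_prod (map path_graph ns)) ?N c" using c by blast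
  next
    fix m assume "\<exists>c. three_rainbow_colouring (cart_prod (map path_graph ns)) m c"
    then obtain c' where "three_rainbow_colouring (cart_prod (map path_graph ns)) m c'" by blast
    then show "?N \<le> m" using lower[OF assms(1) n2] by blast
  qed
  then show ?thesis using sumeq by simp
qed


end
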